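(* Fix a treatment group (age at first birth) $d$, a post-treatment target age $a$, and a control group $d'$ with $d' > a \ge d$. Suppose the No Anticipation assumption holds for both genders $g\in\{f,m\}$ and both groups $d$ and $d'$, and suppose the Equal Difference in Normalized Trends assumption holds: $$\frac{\gamma_{\mathrm{PT}}(f,d,d',a)}{APO(f,d,\infty,a)}=\frac{\gamma_{\mathrm{PT}}(m,d,d',a)}{APO(m,d,\infty,a)}.$$ Then $$\delta_\theta(f,d,d',a)-\delta_\theta(m,d,d',a)=\mathrm{Bias}(d,d',a)\,\big[\theta(f,d,a)-\theta(m,d,a)\big],$$ where $$\mathrm{Bias}(d,d',a)=\frac{APO(f,d,\infty,a)}{APO(f,d,\infty,a)-\gamma_{\mathrm{PT}}(f,d,d',a)}=\frac{APO(m,d,\infty,a)}{APO(m,d,\infty,a)-\gamma_{\mathrm{PT}}(m,d,d',a)}$$ (in particular, the two expressions for $\mathrm{Bias}(d,d',a)$ are equal).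
   Context: Population of individuals with gender $G\in\{f,m\}$ and age at first childbirth $D$ (with $D=\infty$ meaning never). For each age $a$ and each (possibly counterfactual) first-birth age $d'\in\mathbb{N}\cup\{\infty\}$ there is a potential outcome (earnings) $Y_a(d')$; observed earnings satisfy consistency $Y_a=Y_a(D)$. Define $APO(g,d,d',a)=\mathbb{E}[Y_a(d')\mid G=g,D=d]$, $ATE(g,d,a)=APO(g,d,d,a)-APO(g,d,\infty,a)$, and $\theta(g,d,a)=ATE(g,d,a)/APO(g,d,\infty,a)$. Descriptive quantities: $\delta_{\mathrm{APO}}(g,d,d',a)=\mathbb{E}[Y_{d-1}\mid G=g,D=d]+\mathbb{E}[Y_a-Y_{d-1}\mid G=g,D=d']$, $\delta_{\mathrm{ATE}}(g,d,d',a)=\mathbb{E}[Y_a\mid G=g,D=d]-\delta_{\mathrm{APO}}(g,d,d',a)$, $\delta_\theta(g,d,d',a)=\delta_{\mathrm{ATE}}(g,d,d',a)/\delta_{\mathrm{APO}}(g,d,d',a)$. Parallel-trends violation: $\gamma_{\mathrm{PT}}(g,d,d',a)=APO(g,d,\infty,a)-APO(g,d,\infty,d-1)-[APO(g,d',\infty,a)-APO(g,d',\infty,d-1)]$. No Anticipation for gender $g$ and group $d$: $APO(g,d,d,b)=APO(g,d,\infty,b)$ for every age $b<d$. All denominators appearing are assumed nonzero. *)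

theory Defs
  imports "HOL-Probability.Probability" "HOL-Library.Extended_Nat"
begin

datatype gender = Fem | Mal

text \<open>Model: probability space M of individuals; G gender, D age at first birth
  (enat, with \<infinity> meaning never), Y a e = potential earnings at age a under first-birth age e.\<close>

definition cexp :: "'i measure \<Rightarrow> ('i \<Rightarrow> real) \<Rightarrow> ('i \<Rightarrow> bool) \<Rightarrow> real" where
  "cexp M X A = (\<integral>x. indicator {x \<in> space M. A x} x * X x \<partial>M) / measure M {x \<in> space M. A x}"

definition Yobs :: "(nat \<Rightarrow> enat \<Rightarrow> 'i \<Rightarrow> real) \<Rightarrow> ('i \<Rightarrow> enat) \<Rightarrow> nat \<Rightarrow> 'i \<Rightarrow> real" where
  "Yobs Y D a i = Y a (D i) i"

definition APO :: "'i measure \<Rightarrow> ('i \<Rightarrow> gender) \<Rightarrow> ('i \<Rightarrow> enat) \<Rightarrow> (nat \<Rightarrow> enat \<Rightarrow> 'i \<Rightarrow> real)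
    \<Rightarrow> gender \<Rightarrow> enat \<Rightarrow> enat \<Rightarrow> nat \<Rightarrow> real" where
  "APO M G D Y g d d' a = cexp M (Y a d') (\<lambda>i. G i = g \<and> D i = d)"

definition ATE where
  "ATE M G D Y g d a = APO M G D Y g d d a - APO M G D Y g d \<infinity> a"

definition theta where
  "theta M G D Y g d a = ATE M G D Y g d a / APO M G D Y g d \<infinity> a"

definition delta_APO :: "'i measure \<Rightarrow> ('i \<Rightarrow> gender) \<Rightarrow> ('i \<Rightarrow> enat) \<Rightarrow> (nat \<Rightarrow> enat \<Rightarrow> 'i \<Rightarrow> real)
    \<Rightarrow> gender \<Rightarrow> nat \<Rightarrow> enat \<Rightarrow> nat \<Rightarrow> real" where
  "delta_APO M G D Y g d d' a =
     cexp M (Yobs Y D (d - 1)) (\<lambda>i. G i = g \<and> D i = enat d)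
   + cexp M (\<lambda>i. Yobs Y D a i - Yobs Y D (d - 1) i) (\<lambda>i. G i = g \<and> D i = d')"

definition delta_ATE where
  "delta_ATE M G D Y g d d' a =
     cexp M (Yobs Y D a) (\<lambda>i. G i = g \<and> D i = enat d) - delta_APO M G D Y g d d' a"

definition delta_theta where
  "delta_theta M G D Y g d d' a = delta_ATE M G D Y g d d' a / delta_APO M G D Y g d d' a"

definition gamma_PT :: "'i measure \<Rightarrow> ('i \<Rightarrow> gender) \<Rightarrow> ('i \<Rightarrow> enat) \<Rightarrow> (nat \<Rightarrow> enat \<Rightarrow> 'i \<Rightarrow> real)
    \<Rightarrow> gender \<Rightarrow> nat \<Rightarrow> enat \<Rightarrow> nat \<Rightarrow> real" where
  "gamma_PT M G D Y g d d' a =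
     APO M G D Y g (enat d) \<infinity> a - APO M G D Y g (enat d) \<infinity> (d - 1)
     - (APO M G D Y g d' \<infinity> a - APO M G D Y g d' \<infinity> (d - 1))"

definition no_anticipation where
  "no_anticipation M G D Y g d \<longleftrightarrow> (\<forall>b::nat. enat b < d \<longrightarrow> APO M G D Y g d d b = APO M G D Y g d \<infinity> b)"

definition Bias where
  "Bias M G D Y d d' a = APO M G D Y Fem (enat d) \<infinity> a
      / (APO M G D Y Fem (enat d) \<infinity> a - gamma_PT M G D Y Fem d d' a)"

end

theory Submission
  imports Defs
begin

lemma alg: fixes Af Am gf gm Tf Tm :: real
 assumes nz: "Af \<noteq> 0" "Am \<noteq> 0" "Af - gf \<noteq> 0" "Am - gm \<noteq> 0" and r': "gm = gf * Am / Af"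
 shows "Af / (Af - gf) = Am / (Am - gm)"
 "(Tf / (Af - gf) - 1) - (Tm / (Am - gm) - 1)
      = Af / (Af - gf) * ((Tf / Af - 1) - (Tm / Am - 1))"
proof -
  have e: "Am - gm = Am * (Af - gf) / Af" using nz r' by (simp add: field_simps)
  show b: "Af / (Af - gf) = Am / (Am - gm)" unfolding e using nz by (simp add: field_simps)
  have 1: "Tf / (Af - gf) = Af / (Af - gf) * (Tf / Af)" using nz by (simp add: field_simps)
  have 2: "Tm / (Am - gm) = Af / (Af - gf) * (Tm / Am)" unfolding b using nz by (simp add: field_simps)
  show "(Tf / (Af - gf) - 1) - (Tm / (Am - gm) - 1)
      = Af / (Af - gf) * ((Tf / Af - 1) - (Tm / Am - 1))" unfolding 1 2 by (simp add: algebra_simps)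
qed

lemma cexp_obs:
  "cexp M (Yobs Y D b) (\<lambda>i. G i = g \<and> D i = e) = APO M G D Y g e e b"
  unfolding APO_def cexp_def Yobs_def
  by (rule arg_cong2[where f="(/)"], rule Bochner_Integration.integral_cong) (auto simp: indicator_def)

lemma cexp_diff:
  assumes "{x \<in> space M. G x = g \<and> D x = e} \<in> sets M"
    and "\<And>b e. integrable M (Y b e)"
  shows "cexp M (\<lambda>i. Yobs Y D a i - Yobs Y D c i) (\<lambda>i. G i = g \<and> D i = e)
       = APO M G D Y g e e a - APO M G D Y g e e c"
proof -
  let ?S = "{x \<in> space M. G x = g \<and> D x = e}"
  have i1: "integrable M (\<lambda>x. indicator ?S x * Y a e x)"
    using integrable_mult_indicator[OF assms(1) assms(2)[of a e]] by simp
  have i2: "integrable M (\<lambda>x. indicator ?S x * Y c e x)"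
    using integrable_mult_indicator[OF assms(1) assms(2)[of c e]] by simp
  have "(\<integral>x. indicator ?S x * (Yobs Y D a x - Yobs Y D c x) \<partial>M)
      = (\<integral>x. indicator ?S x * Y a e x - indicator ?S x * Y c e x \<partial>M)"
    by (rule Bochner_Integration.integral_cong) (auto simp: indicator_def Yobs_def)
  also have "\<dots> = (\<integral>x. indicator ?S x * Y a e x \<partial>M) - (\<integral>x. indicator ?S x * Y c e x \<partial>M)"
    using i1 i2 by simp
  finally show ?thesis unfolding APO_def cexp_def by (simp add: diff_divide_distrib)
qed

theorem theorem1:
  fixes M :: "'i measure" and G :: "'i \<Rightarrow> gender" and D :: "'i \<Rightarrow> enat"
    and Y :: "nat \<Rightarrow> enat \<Rightarrow> 'i \<Rightarrow> real"
    and d a :: nat and d' :: enat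
  assumes "prob_space M"
    and "\<And>g e. {x \<in> space M. G x = g \<and> D x = e} \<in> sets M"
    and "\<And>b e. integrable M (Y b e)"
    and "d \<ge> 1" and "d \<le> a" and "enat a < d'"
    and "\<And>g. no_anticipation M G D Y g (enat d)"
    and "\<And>g. no_anticipation M G D Y g d'"
    and "gamma_PT M G D Y Fem d d' a / APO M G D Y Fem (enat d) \<infinity> a
         = gamma_PT M G D Y Mal d d' a / APO M G D Y Mal (enat d) \<infinity> a"
    and "\<And>g. APO M G D Y g (enat d) \<infinity> a \<noteq> 0"
    and "\<And>g. delta_APO M G D Y g d d' a \<noteq> 0"
    and "\<And>g. APO M G D Y g (enat d) \<infinity> a - gamma_PT M G D Y g d d' a \<noteq> 0"
  shows "delta_theta M G D Y Fem d d' a - delta_theta M G D Y Mal d d' a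
           = Bias M G D Y d d' a * (theta M G D Y Fem (enat d) a - theta M G D Y Mal (enat d) a)
         \<and> Bias M G D Y d d' a = APO M G D Y Mal (enat d) \<infinity> a
              / (APO M G D Y Mal (enat d) \<infinity> a - gamma_PT M G D Y Mal d d' a)"
proof -
  have lt1: "enat (d - 1) < enat d" using assms(4) by simp
  have "enat (d - 1) \<le> enat a" using assms(5) by simp
  then have lt2: "enat (d - 1) < d'" using assms(6) by (rule le_less_trans)
  have dapo: "delta_APO M G D Y g d d' a
      = APO M G D Y g (enat d) \<infinity> a - gamma_PT M G D Y g d d' a" for g
  proof -
    have "APO M G D Y g (enat d) (enat d) (d - 1) = APO M G D Y g (enat d) \<infinity> (d - 1)"
      using assms(7)[of g] lt1 unfolding no_anticipation_def by blast
    moreover have "APO M G D Y g d' d' (d - 1) = APO M G D Y g d' \<infinity> (d - 1)"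
      using assms(8)[of g] lt2 unfolding no_anticipation_def by blast
    moreover have "APO M G D Y g d' d' a = APO M G D Y g d' \<infinity> a"
      using assms(8)[of g] assms(6) unfolding no_anticipation_def by blast
    moreover have "cexp M (Yobs Y D (d - 1)) (\<lambda>i. G i = g \<and> D i = enat d) = APO M G D Y g (enat d) (enat d) (d - 1)"
      by (rule cexp_obs)
    moreover have "cexp M (\<lambda>i. Yobs Y D a i - Yobs Y D (d - 1) i) (\<lambda>i. G i = g \<and> D i = d')
       = APO M G D Y g d' d' a - APO M G D Y g d' d' (d - 1)"
      by (rule cexp_diff[OF assms(2) assms(3)])
    ultimately show ?thesis
      unfolding delta_APO_def gamma_PT_def
      by simp
  qed
  have dth: "delta_theta M G D Y g d d' a
      = APO M G D Y g (enat d) (enat d) a / (APO M G D Y g (enat d) \<infinity> a - gamma_PT M G D Y g d d' a) - 1" for g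
    using assms(12)[of g]
    unfolding delta_theta_def delta_ATE_def dapo cexp_obs
    by (simp add: diff_divide_distrib)
  have th: "theta M G D Y g (enat d) a = APO M G D Y g (enat d) (enat d) a / APO M G D Y g (enat d) \<infinity> a - 1" for g
    using assms(10)[of g] unfolding theta_def ATE_def by (simp add: diff_divide_distrib)
  define Af where "Af = APO M G D Y Fem (enat d) \<infinity> a"
  define Am where "Am = APO M G D Y Mal (enat d) \<infinity> a"
  define gf where "gf = gamma_PT M G D Y Fem d d' a"
  define gm where "gm = gamma_PT M G D Y Mal d d' a"
  define Tf where "Tf = APO M G D Y Fem (enat d) (enat d) a"
  define Tm where "Tm = APO M G D Y Mal (enat d) (enat d) a"
  have nz: "Af \<noteq> 0" "Am \<noteq> 0" "Af - gf \<noteq> 0" "Am - gm \<noteq> 0"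
    using assms(10,12) unfolding Af_def Am_def gf_def gm_def by auto
  have r: "gf / Af = gm / Am" using assms(9) unfolding Af_def Am_def gf_def gm_def .
  then have r': "gm = gf * Am / Af" using nz by (simp add: field_simps)
  note b = alg(1)[OF nz r']
  note main = alg(2)[OF nz r', of Tf Tm]
  show ?thesis
    unfolding dth th Bias_def
    using main b unfolding Af_def Am_def gf_def gm_def Tf_def Tm_def by simp
qed

end
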